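(* Let $(N_\mu)_{\mu\in\mathbb N}$ be positive integers with $N_{\mu+1}/N_\mu\to\infty$, and such that $\varepsilon_\mu:=\frac12\sqrt{N_\mu/N_{\mu+1}}$ is non-increasing. Define $\Delta:\mathbb N\times\mathbb N\to[0,\infty]$ by $$\Delta(n,m)=\inf\Big\{\sum_k\varepsilon_{\mu_k}:\ (\mu_k)\text{ a finite family of indices with } m\le\sum_kN_{\mu_k}\le n\Big\}$$ (infimum of the empty set $=+\infty$). Then $\Delta$ satisfies $\Delta(n+1,m)\le\Delta(n,m)\le\Delta(n,m+1)$ and $\Delta(n_1+n_2,m_1+m_2)\le\Delta(n_1,m_1)+\Delta(n_2,m_2)$, and $\Delta(N_\mu,N_\mu)\to0$ (so rate $1$ is attained along the sequence $(N_\mu,N_\mu)$). However, for $n_\mu=N_{\mu+1}-1$ and $m_\mu=\lceil\sqrt{N_\mu N_{\mu+1}}\rceil$ one has $m_\mu/n_\mu\to0$ while $\liminf_\mu\Delta(n_\mu,m_\mu)\ge\frac12$. *)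

theory Defs
  imports Complex_Main "HOL-Library.Multiset" "HOL-Library.Extended_Real" "HOL-Library.Liminf_Limsup"
begin

definition eps :: "(nat \<Rightarrow> nat) \<Rightarrow> nat \<Rightarrow> real" where
  "eps N \<mu> = sqrt (real (N \<mu>) / real (N (Suc \<mu>))) / 2"

definition Delta :: "(nat \<Rightarrow> nat) \<Rightarrow> nat \<Rightarrow> nat \<Rightarrow> ereal" where
  "Delta N n m = Inf {ereal (\<Sum>\<mu>\<in>#F. eps N \<mu>) | F.
      m \<le> (\<Sum>\<mu>\<in>#F. N \<mu>) \<and> (\<Sum>\<mu>\<in>#F. N \<mu>) \<le> n}"

end

theory Submission
  imports Defs
begin

lemma eps_nonneg: "eps N m \<ge> 0"
  unfolding eps_def by simp

lemma sum_eps_nonneg: "(\<Sum>\<mu>\<in>#F. eps N \<mu>) \<ge> 0"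
  by (induction F) (auto intro: add_nonneg_nonneg eps_nonneg)

lemma mem_le_sum: "x \<in># F \<Longrightarrow> (f x::nat) \<le> (\<Sum>y\<in>#F. f y)"
  by (metis le_add1 multi_member_split sum_mset.add_mset image_mset_add_mset)

lemma Inf_add_le:
  fixes S S1 S2 :: "ereal set"
  assumes nn1: "\<And>a. a \<in> S1 \<Longrightarrow> 0 \<le> a" and nn2: "\<And>b. b \<in> S2 \<Longrightarrow> 0 \<le> b"
    and cl: "\<And>a b. a \<in> S1 \<Longrightarrow> b \<in> S2 \<Longrightarrow> a + b \<in> S"
  shows "Inf S \<le> Inf S1 + Inf S2"
proof (cases "S1 = {} \<or> S2 = {}")
  case True
  have "Inf S1 \<ge> 0" "Inf S2 \<ge> 0" using nn1 nn2 by (auto intro: Inf_greatest)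
  then have h: "Inf S1 + Inf S2 = \<infinity>" using True by (auto simp: top_ereal_def)
  show ?thesis unfolding h by simp
next
  case False
  have i2: "Inf S2 \<ge> 0" using nn2 by (auto intro: Inf_greatest)
  have "Inf S1 + Inf S2 = (INF a\<in>S1. a + Inf S2)"
    using INF_ereal_add_left[of S1 "Inf S2" "\<lambda>x. x"] False i2 nn1 by auto
  also have "\<dots> = (INF a\<in>S1. INF b\<in>S2. a + b)"
  proof (rule INF_cong[OF refl])
    fix a assume "a \<in> S1"
    then show "a + Inf S2 = (INF b\<in>S2. a + b)"
      using INF_ereal_add_right[of S2 a "\<lambda>x. x"] False nn1 nn2 by force
  qed
  also have "\<dots> \<ge> Inf S"
    by (intro INF_greatest Inf_lower cl)
  finally show ?thesis .
qed

lemma Delta_nonneg: "Delta N n m \<ge> 0"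
  unfolding Delta_def by (auto intro!: Inf_greatest simp: sum_eps_nonneg)

lemma Delta_le: "m \<le> (\<Sum>\<mu>\<in>#F. N \<mu>) \<Longrightarrow> (\<Sum>\<mu>\<in>#F. N \<mu>) \<le> n \<Longrightarrow> Delta N n m \<le> ereal (\<Sum>\<mu>\<in>#F. eps N \<mu>)"
  unfolding Delta_def by (rule Inf_lower) blast

theorem mainTheorem18:
  fixes N :: "nat \<Rightarrow> nat"
  assumes pos: "\<And>\<mu>. N \<mu> > 0"
    and ratio: "filterlim (\<lambda>\<mu>. real (N (Suc \<mu>)) / real (N \<mu>)) at_top sequentially"
    and dec: "decseq (eps N)"
  shows "(\<forall>n m. Delta N (n + 1) m \<le> Delta N n m \<and> Delta N n m \<le> Delta N n (m + 1))
    \<and> (\<forall>n1 n2 m1 m2. Delta N (n1 + n2) (m1 + m2) \<le> Delta N n1 m1 + Delta N n2 m2)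
    \<and> ((\<lambda>\<mu>. Delta N (N \<mu>) (N \<mu>)) \<longlonglongrightarrow> 0)
    \<and> ((\<lambda>\<mu>. real (nat \<lceil>sqrt (real (N \<mu>) * real (N (Suc \<mu>)))\<rceil>) / real (N (Suc \<mu>) - 1))
          \<longlonglongrightarrow> 0)
    \<and> liminf (\<lambda>\<mu>. Delta N (N (Suc \<mu>) - 1) (nat \<lceil>sqrt (real (N \<mu>) * real (N (Suc \<mu>)))\<rceil>))
          \<ge> 1/2"
proof -
  have inv0: "(\<lambda>\<mu>. real (N \<mu>) / real (N (Suc \<mu>))) \<longlonglongrightarrow> 0"
    using tendsto_inverse_0_at_top[OF ratio] by simp
  have eps0: "eps N \<longlonglongrightarrow> 0"
    unfolding eps_def[abs_def]
    using tendsto_divide[OF tendsto_real_sqrt[OF inv0] tendsto_const[of 2]] by simp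
  have Ninf: "filterlim (\<lambda>\<mu>. real (N (Suc \<mu>))) at_top sequentially"
  proof (rule filterlim_at_top_mono[OF ratio])
    show "\<forall>\<^sub>F \<mu> in sequentially. real (N (Suc \<mu>)) / real (N \<mu>) \<le> real (N (Suc \<mu>))"
    proof (intro always_eventually allI)
      fix \<mu> have "real (N \<mu>) \<ge> 1" using pos[of \<mu>] by simp
      then show "real (N (Suc \<mu>)) / real (N \<mu>) \<le> real (N (Suc \<mu>))"
        by (simp add: divide_le_eq mult_le_cancel_left1)
    qed
  qed
  have inv1: "(\<lambda>\<mu>. 1 / real (N (Suc \<mu>))) \<longlonglongrightarrow> 0"
    using tendsto_inverse_0_at_top[OF Ninf] by (simp add: divide_inverse)
  show ?thesis
proof (intro conjI allI)
  fix n m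
  show "Delta N (n + 1) m \<le> Delta N n m" unfolding Delta_def
    by (rule Inf_superset_mono) auto
  show "Delta N n m \<le> Delta N n (m + 1)" unfolding Delta_def
    by (rule Inf_superset_mono) auto
next
  fix n1 n2 m1 m2
  show "Delta N (n1 + n2) (m1 + m2) \<le> Delta N n1 m1 + Delta N n2 m2"
    unfolding Delta_def
  proof (rule Inf_add_le)
    fix a b assume "a \<in> {ereal (\<Sum>\<mu>\<in>#F. eps N \<mu>) | F.
      m1 \<le> (\<Sum>\<mu>\<in>#F. N \<mu>) \<and> (\<Sum>\<mu>\<in>#F. N \<mu>) \<le> n1}"
      "b \<in> {ereal (\<Sum>\<mu>\<in>#F. eps N \<mu>) | F.
      m2 \<le> (\<Sum>\<mu>\<in>#F. N \<mu>) \<and> (\<Sum>\<mu>\<in>#F. N \<mu>) \<le> n2}"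
    then obtain F1 F2 where "a = ereal (\<Sum>\<mu>\<in>#F1. eps N \<mu>)" "m1 \<le> (\<Sum>\<mu>\<in>#F1. N \<mu>)" "(\<Sum>\<mu>\<in>#F1. N \<mu>) \<le> n1"
      "b = ereal (\<Sum>\<mu>\<in>#F2. eps N \<mu>)" "m2 \<le> (\<Sum>\<mu>\<in>#F2. N \<mu>)" "(\<Sum>\<mu>\<in>#F2. N \<mu>) \<le> n2"
      by blast
    then show "a + b \<in> {ereal (\<Sum>\<mu>\<in>#F. eps N \<mu>) | F.
      m1 + m2 \<le> (\<Sum>\<mu>\<in>#F. N \<mu>) \<and> (\<Sum>\<mu>\<in>#F. N \<mu>) \<le> n1 + n2}"
      by (intro CollectI exI[of _ "F1 + F2"]) auto
  qed (auto simp: sum_eps_nonneg)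
next
  show "(\<lambda>\<mu>. Delta N (N \<mu>) (N \<mu>)) \<longlonglongrightarrow> 0"
  proof (rule tendsto_sandwich[where f="\<lambda>_. 0" and h="\<lambda>\<mu>. ereal (eps N \<mu>)"])
    show "\<forall>\<^sub>F \<mu> in sequentially. 0 \<le> Delta N (N \<mu>) (N \<mu>)" by (simp add: Delta_nonneg)
    show "\<forall>\<^sub>F \<mu> in sequentially. Delta N (N \<mu>) (N \<mu>) \<le> ereal (eps N \<mu>)"
    proof (intro always_eventually allI)
      fix \<mu> show "Delta N (N \<mu>) (N \<mu>) \<le> ereal (eps N \<mu>)"
        using Delta_le[where F="{#\<mu>#}" and N=N and m="N \<mu>" and n="N \<mu>"] by simp
    qed
    show "(\<lambda>\<mu>. ereal (eps N \<mu>)) \<longlonglongrightarrow> 0"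
      using tendsto_ereal[OF eps0] by (simp add: zero_ereal_def)
  qed simp
next
  show "((\<lambda>\<mu>. real (nat \<lceil>sqrt (real (N \<mu>) * real (N (Suc \<mu>)))\<rceil>) / real (N (Suc \<mu>) - 1))
          \<longlonglongrightarrow> 0)"
  proof (rule tendsto_sandwich[where f="\<lambda>_. 0" and h="\<lambda>\<mu>. 2 * sqrt (real (N \<mu>) / real (N (Suc \<mu>))) + 2 * (1 / real (N (Suc \<mu>)))"])
    show "\<forall>\<^sub>F \<mu> in sequentially. 0 \<le> real (nat \<lceil>sqrt (real (N \<mu>) * real (N (Suc \<mu>)))\<rceil>) / real (N (Suc \<mu>) - 1)"
      by (intro always_eventually allI divide_nonneg_nonneg) (auto intro: less_le_trans[of _ 0])
    have "\<forall>\<^sub>F \<mu> in sequentially. real (N (Suc \<mu>)) \<ge> 2"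
      using Ninf unfolding filterlim_at_top by blast
    then show "\<forall>\<^sub>F \<mu> in sequentially. real (nat \<lceil>sqrt (real (N \<mu>) * real (N (Suc \<mu>)))\<rceil>) / real (N (Suc \<mu>) - 1)
       \<le> 2 * sqrt (real (N \<mu>) / real (N (Suc \<mu>))) + 2 * (1 / real (N (Suc \<mu>)))"
    proof eventually_elim
      case (elim \<mu>)
      define a where "a = real (N \<mu>)"
      define b where "b = real (N (Suc \<mu>))"
      have a0: "a > 0" using pos a_def by simp
      have b2: "b \<ge> 2" using elim b_def by simp
      define x where "x = real (nat \<lceil>sqrt (a * b)\<rceil>)"
      have x0: "x \<ge> 0" using x_def by simp
      have x1: "x \<le> sqrt (a * b) + 1" unfolding x_def
        by (metis ceiling_correct le_of_int_ceiling of_int_ceiling_le_add_one of_nat_nat real_sqrt_ge_zero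
            ceiling_le_zero linorder_not_le nat_0_iff of_nat_0 order.trans mult_nonneg_nonneg a0 b2 order_less_imp_le
            zero_le_numeral add_nonneg_nonneg zero_le_one order_trans)
      have bd: "real (N (Suc \<mu>) - 1) = b - 1" using b2 b_def by (simp add: of_nat_diff)
      have "x / (b - 1) \<le> x / (b / 2)"
        using x0 b2 by (intro divide_left_mono) auto
      also have "\<dots> = 2 * x / b" by simp
      also have "\<dots> \<le> 2 * (sqrt (a * b) + 1) / b"
        using x1 b2 by (intro divide_right_mono) auto
      also have "\<dots> = 2 * (sqrt (a * b) / b) + 2 * (1 / b)" by (simp add: add_divide_distrib distrib_left)
      also have "sqrt (a * b) / b = sqrt (a / b)"
      proof -
        have "sqrt (a * b) = sqrt (a / b) * sqrt (b * b)"
        proof -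
          have "a * b = (a / b) * (b * b)" using b2 by simp
          then show ?thesis by (metis real_sqrt_mult)
        qed
        also have "sqrt (b * b) = b" using b2 by simp
        finally show ?thesis using b2 by simp
      qed
      finally show ?case unfolding bd x_def a_def b_def .
    qed
    have "(\<lambda>\<mu>. 2 * sqrt (real (N \<mu>) / real (N (Suc \<mu>))) + 2 * (1 / real (N (Suc \<mu>)))) \<longlonglongrightarrow> 2 * sqrt 0 + 2 * 0"
      by (intro tendsto_intros inv0 inv1)
    then show "(\<lambda>\<mu>. 2 * sqrt (real (N \<mu>) / real (N (Suc \<mu>))) + 2 * (1 / real (N (Suc \<mu>)))) \<longlonglongrightarrow> 0"
      by simp
  qed simp
next
  obtain K where K: "\<And>\<mu>. \<mu> \<ge> K \<Longrightarrow> real (N (Suc \<mu>)) / real (N \<mu>) \<ge> 2"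
    using ratio unfolding filterlim_at_top eventually_sequentially by blast
  have K2: "N (Suc \<mu>) \<ge> 2 * N \<mu>" if "\<mu> \<ge> K" for \<mu>
  proof -
    have "real (N (Suc \<mu>)) \<ge> 2 * real (N \<mu>)"
      using K[OF that] pos[of \<mu>] by (simp add: le_divide_eq)
    then show ?thesis by linarith
  qed
  have mono: "N \<mu> \<le> N \<nu>" if "K \<le> \<mu>" "\<mu> \<le> \<nu>" for \<mu> \<nu>
    using that(2)
  proof (induction \<nu> rule: dec_induct)
    case (step n)
    then show ?case using K2[of n] that(1) by simp
  qed simp
  have grow: "N (K + j) \<ge> j + 1" for j
  proof (induction j)
    case 0 then show ?case using pos[of K] by simp
  next
    case (Suc j)
    then show ?case using K2[of "K + j"] pos[of "K + j"] by simp
  qed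
  define C where "C = Max (N ` {..K})"
  define M where "M = K + C"
  have key: "\<nu> \<le> \<mu> \<and> N \<nu> \<le> N \<mu>" if "\<mu> \<ge> M" "N \<nu> < N (Suc \<mu>)" for \<mu> \<nu>
  proof -
    have "\<nu> \<le> \<mu>"
    proof (rule ccontr)
      assume "\<not> \<nu> \<le> \<mu>"
      then have "N (Suc \<mu>) \<le> N \<nu>" using mono[of "Suc \<mu>" \<nu>] that(1) M_def by simp
      then show False using that(2) by simp
    qed
    moreover have "N \<nu> \<le> N \<mu>"
    proof (cases "\<nu> \<le> K")
      case True
      then have "N \<nu> \<le> C" unfolding C_def by (intro Max_ge) auto
      moreover have "N \<mu> \<ge> C + 1" using grow[of "\<mu> - K"] that(1) M_def by simp
      ultimately show ?thesis by simp
    next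
      case False
      then show ?thesis using mono[of \<nu> \<mu>] \<open>\<nu> \<le> \<mu>\<close> by simp
    qed
    ultimately show ?thesis by simp
  qed
  have bound: "1/2 \<le> (\<Sum>\<nu>\<in>#F. eps N \<nu>)"
    if \<mu>: "\<mu> \<ge> M" and F1: "nat \<lceil>sqrt (real (N \<mu>) * real (N (Suc \<mu>)))\<rceil> \<le> (\<Sum>\<nu>\<in>#F. N \<nu>)"
      and F2: "(\<Sum>\<nu>\<in>#F. N \<nu>) \<le> N (Suc \<mu>) - 1" for \<mu> F
  proof -
    define a where "a = real (N \<mu>)"
    define b where "b = real (N (Suc \<mu>))"
    have a0: "a > 0" using pos a_def by simp
    have b0: "b > 0" using pos b_def by simp
    have el: "eps N \<mu> / a * real (N \<nu>) \<le> eps N \<nu>" if "\<nu> \<in># F" for \<nu>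
    proof -
      have "N \<nu> < N (Suc \<mu>)" using mem_le_sum[OF that, of N] F2 pos[of "Suc \<mu>"] by linarith
      then have k: "\<nu> \<le> \<mu>" "N \<nu> \<le> N \<mu>" using key \<mu> by auto
      have "eps N \<mu> \<le> eps N \<nu>" using dec k(1) unfolding decseq_def by blast
      moreover have "real (N \<nu>) / a \<le> 1" using k(2) a0 a_def by simp
      moreover have "eps N \<mu> \<ge> 0" by (rule eps_nonneg)
      ultimately have "eps N \<mu> * (real (N \<nu>) / a) \<le> eps N \<nu>"
        by (metis mult_left_le order_trans)
      then show ?thesis by simp
    qed
    have "eps N \<mu> / a * real (\<Sum>\<nu>\<in>#F. N \<nu>) = (\<Sum>\<nu>\<in>#F. eps N \<mu> / a * real (N \<nu>))"
      by (simp add: sum_mset_distrib_left multiset.map_comp o_def)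
    also have "\<dots> \<le> (\<Sum>\<nu>\<in>#F. eps N \<nu>)"
      by (rule sum_mset_mono) (rule el)
    finally have s1: "eps N \<mu> / a * real (\<Sum>\<nu>\<in>#F. N \<nu>) \<le> (\<Sum>\<nu>\<in>#F. eps N \<nu>)" .
    have "sqrt (a * b) \<le> real (\<Sum>\<nu>\<in>#F. N \<nu>)"
    proof -
      have "sqrt (a * b) \<le> real_of_int \<lceil>sqrt (a * b)\<rceil>" by (rule le_of_int_ceiling)
      also have "\<dots> = real (nat \<lceil>sqrt (a * b)\<rceil>)" using a0 b0 by simp
      also have "\<dots> \<le> real (\<Sum>\<nu>\<in>#F. N \<nu>)" using F1 unfolding a_def b_def by (simp only: of_nat_le_iff)
      finally show ?thesis .
    qed
    then have "eps N \<mu> / a * sqrt (a * b) \<le> eps N \<mu> / a * real (\<Sum>\<nu>\<in>#F. N \<nu>)"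
      using a0 eps_nonneg[of N \<mu>] by (intro mult_left_mono) auto
    moreover have "eps N \<mu> / a * sqrt (a * b) = 1/2"
    proof -
      have "sqrt (a / b) * sqrt (a * b) = sqrt (a * a)"
        using b0 by (simp add: real_sqrt_mult[symmetric])
      also have "\<dots> = a" using a0 by simp
      finally have "sqrt (a / b) * sqrt (a * b) = a" .
      then show ?thesis unfolding eps_def a_def[symmetric] b_def[symmetric] using a0 by (simp add: field_simps)
    qed
    ultimately show ?thesis using s1 by linarith
  qed
  show "liminf (\<lambda>\<mu>. Delta N (N (Suc \<mu>) - 1) (nat \<lceil>sqrt (real (N \<mu>) * real (N (Suc \<mu>)))\<rceil>))
          \<ge> 1/2"
  proof (rule Liminf_bounded, unfold eventually_sequentially, intro exI allI impI)
    fix \<mu> assume "\<mu> \<ge> M"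
    show "1/2 \<le> Delta N (N (Suc \<mu>) - 1) (nat \<lceil>sqrt (real (N \<mu>) * real (N (Suc \<mu>)))\<rceil>)"
      unfolding Delta_def
    proof (rule Inf_greatest)
      fix x assume "x \<in> {ereal (\<Sum>\<mu>\<in>#F. eps N \<mu>) | F.
        nat \<lceil>sqrt (real (N \<mu>) * real (N (Suc \<mu>)))\<rceil> \<le> (\<Sum>\<mu>\<in>#F. N \<mu>) \<and> (\<Sum>\<mu>\<in>#F. N \<mu>) \<le> N (Suc \<mu>) - 1}"
      then obtain F where "x = ereal (\<Sum>\<mu>\<in>#F. eps N \<mu>)"
        "nat \<lceil>sqrt (real (N \<mu>) * real (N (Suc \<mu>)))\<rceil> \<le> (\<Sum>\<mu>\<in>#F. N \<mu>)" "(\<Sum>\<mu>\<in>#F. N \<mu>) \<le> N (Suc \<mu>) - 1"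
        by blast
      then have "1/2 \<le> (\<Sum>\<mu>\<in>#F. eps N \<mu>)" "x = ereal (\<Sum>\<mu>\<in>#F. eps N \<mu>)"
        using bound[OF \<open>\<mu> \<ge> M\<close>] by blast+
      then have "ereal (1/2) \<le> x" by simp
      moreover have "(1/2::ereal) = ereal (1/2)"
        by (metis ereal_divide one_ereal_def numeral_eq_ereal zero_neq_numeral)
      ultimately show "1/2 \<le> x" by simp
    qed
  qed
qed
qed

end
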